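(* Let $\mathcal A_1,\dots,\mathcal A_d\subset\mathbb Z^d$ be finite sets such that the Cayley configuration $C(\mathcal A_1,\dots,\mathcal A_d)$ contains a $(2d-1)$-simplex, let $\mathcal A=\bigcup_i\mathcal A_i=\{a_1,\dots,a_n\}$ and $C=(c_{ij})\in\mathbb R^{d\times n}$ with $c_{ij}=0$ whenever $a_j\notin\mathcal A_i$. Assume there are $p$ mixed $(2d-1)$-simplices $\Delta_1,\dots,\Delta_p$ which occur in a regular subdivision $\Gamma$ of $C(\mathcal A_1,\dots,\mathcal A_d)$ and which are positively decorated by $C$. Let $h$ be a height function inducing $\Gamma$ and define $h^{(i)}(a_j)=h(a_j,e_i)$ for $a_j\in\mathcal A_i$. Then there exists $t_0>0$ such that for all $0<t<t_0$ the system \[ f_{i,t}(x)=\sum_{a_j\in\mathcal A_i}c_{ij}\,t^{h^{(i)}(a_j)}\,x^{a_j}=0,\qquad i=1,\dots,d, \] has at least $p$ nondegenerate solutions in $\mathbb R^d_{>0}$. In particular, the result holds if $\Delta_1,\Delta_2$ are two positively decorated mixed $(2d-1)$-simplices of $C(\mathcal A_1,\dots,\mathcal A_d)$ which share a facet.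
   Context: $e_1,\dots,e_d$ is the canonical basis of $\mathbb Z^d$. The Cayley configuration is $C(\mathcal A_1,\dots,\mathcal A_d)=\bigcup_{i=1}^d(\mathcal A_i\times\{e_i\})\subset\mathbb Z^d\times\mathbb Z^d$. A $(2d-1)$-simplex of it is a subset of $2d$ affinely independent points. It is mixed if it consists of exactly two points $(a_{j_1},e_i),(a_{j_2},e_i)$ (with $a_{j_1},a_{j_2}\in\mathcal A_i$) for each $i=1,\dots,d$; it is positively decorated by $C$ if $c_{i,j_1}c_{i,j_2}<0$ for each $i$. Regular subdivisions of a finite point configuration $P\subset\mathbb R^N$ (here $N=2d$) are defined by a height function $h:P\to\mathbb R$: lift each $q\in P$ to $(q,h(q))$; the lower faces of the convex hull of the lifted points are those having an inner normal with positive last coordinate; each lower face $F$ gives the cell $\{q:(q,h(q))\in F\}$; the cells form the regular subdivision induced by $h$, and a simplex occurs in it if it is a cell. Two simplices share a facet if the intersection of their convex hulls is a facet of both. A solution is nondegenerate if the Jacobian determinant of $(f_{1,t},\dots,f_{d,t})$ does not vanish at it. *)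

theory Defs
  imports "HOL-Analysis.Analysis"
begin

type_synonym 'd pt = "(real^'d) \<times> (real^'d)"

definition cay_pt :: "int^'d \<Rightarrow> 'd::finite \<Rightarrow> 'd pt" where
  "cay_pt a i = ((\<chi> k. real_of_int (a $ k)), axis i 1)"

definition cayley :: "('d::finite \<Rightarrow> (int^'d) set) \<Rightarrow> 'd pt set" where
  "cayley A = {cay_pt a i | a i. a \<in> A i}"

definition is_simplex :: "'d::finite pt set \<Rightarrow> 'd pt set \<Rightarrow> bool" where
  "is_simplex P S \<longleftrightarrow> S \<subseteq> P \<and> finite S \<and> card S = 2 * CARD('d) \<and> \<not> affine_dependent S"

definition mixed_simplex :: "('d::finite \<Rightarrow> (int^'d) set) \<Rightarrow> 'd pt set \<Rightarrow> bool" where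
  "mixed_simplex A S \<longleftrightarrow> is_simplex (cayley A) S \<and>
     (\<forall>i. card {a. a \<in> A i \<and> cay_pt a i \<in> S} = 2)"

definition pos_decorated :: "('d::finite \<Rightarrow> (int^'d) set) \<Rightarrow> ('d \<Rightarrow> int^'d \<Rightarrow> real) \<Rightarrow> 'd pt set \<Rightarrow> bool" where
  "pos_decorated A c S \<longleftrightarrow> (\<forall>i. \<exists>a1 a2. {a. a \<in> A i \<and> cay_pt a i \<in> S} = {a1, a2} \<and> a1 \<noteq> a2 \<and>
       c i a1 * c i a2 < 0)"

definition lower_face :: "'d::finite pt set \<Rightarrow> ('d pt \<Rightarrow> real) \<Rightarrow> ('d pt \<times> real) set \<Rightarrow> bool" where
  "lower_face P h F \<longleftrightarrow>
     (let Q = convex hull ((\<lambda>q. (q, h q)) ` P) in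
       F \<noteq> {} \<and> (\<exists>u. snd u > 0 \<and> F = {x \<in> Q. \<forall>y\<in>Q. inner u x \<le> inner u y}))"

definition occurs_in_reg_subdiv :: "'d::finite pt set \<Rightarrow> ('d pt \<Rightarrow> real) \<Rightarrow> 'd pt set \<Rightarrow> bool" where
  "occurs_in_reg_subdiv P h S \<longleftrightarrow>
     (\<exists>F. lower_face P h F \<and> S = {q \<in> P. (q, h q) \<in> F})"

definition monom :: "real^'d \<Rightarrow> int^'d::finite \<Rightarrow> real" where
  "monom x a = (\<Prod>k\<in>UNIV. (x $ k) powr (real_of_int (a $ k)))"

definition sys :: "('d::finite \<Rightarrow> (int^'d) set) \<Rightarrow> ('d \<Rightarrow> int^'d \<Rightarrow> real) \<Rightarrow> ('d pt \<Rightarrow> real)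
                   \<Rightarrow> real \<Rightarrow> real^'d \<Rightarrow> real^'d" where
  "sys A c h t x = (\<chi> i. \<Sum>a\<in>A i. c i a * t powr (h (cay_pt a i)) * monom x a)"

definition nondeg_pos_solution :: "(real^'d::finite \<Rightarrow> real^'d) \<Rightarrow> real^'d \<Rightarrow> bool" where
  "nondeg_pos_solution F x \<longleftrightarrow> (\<forall>k. x $ k > 0) \<and> F x = 0 \<and>
     F differentiable (at x) \<and> det (jacobian F (at x)) \<noteq> 0"

definition many_solutions :: "('d::finite \<Rightarrow> (int^'d) set) \<Rightarrow> ('d \<Rightarrow> int^'d \<Rightarrow> real) \<Rightarrow> ('d pt \<Rightarrow> real)
                   \<Rightarrow> nat \<Rightarrow> bool" where
  "many_solutions A c h p \<longleftrightarrow> (\<exists>t0>0. \<forall>t. 0 < t \<and> t < t0 \<longrightarrow>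
     (\<exists>X. finite X \<and> card X \<ge> p \<and> (\<forall>x\<in>X. nondeg_pos_solution (sys A c h t) x)))"

definition share_facet :: "'d::finite pt set \<Rightarrow> 'd pt set \<Rightarrow> bool" where
  "share_facet S1 S2 \<longleftrightarrow> (convex hull S1 \<inter> convex hull S2) facet_of (convex hull S1) \<and>
                         (convex hull S1 \<inter> convex hull S2) facet_of (convex hull S2)"

end

theory Submission
  imports Defs
begin


lemma persist:
  fixes G :: "'p \<Rightarrow> real^'n \<Rightarrow> real^'n" and G' :: "'p \<Rightarrow> real^'n \<Rightarrow> real^'n \<Rightarrow> real^'n"
  assumes L: "linear L" "inj L"
  and der: "\<And>t z. (G t has_derivative G' t z) (at z)"
  and close: "\<And>e. e>0 \<Longrightarrow> \<exists>r>0. eventually (\<lambda>t. \<forall>z\<in>cball z0 r. \<forall>v. norm (G' t z v - L v) \<le> e * norm v) F"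
  and lim: "((\<lambda>t. G t z0) \<longlongrightarrow> 0) F"
  and "r > 0"
  shows "eventually (\<lambda>t. \<exists>z\<in>cball z0 r. G t z = 0 \<and> inj (G' t z)) F"
proof -
  obtain Li where Li: "linear Li" "Li \<circ> L = id" using linear_injective_left_inverse L by blast
  have LLi: "L \<circ> Li = id" using linear_inverse_left[OF L(1) Li(1)] Li(2) by blast
  obtain K where K: "K > 0" "\<And>y. norm (Li y) \<le> K * norm y" using linear_bounded_pos[OF Li(1)] by blast
  obtain r1 where r1: "r1 > 0" and ev1: "eventually (\<lambda>t. \<forall>z\<in>cball z0 r1. \<forall>v. norm (G' t z v - L v) \<le> (1/(2*K)) * norm v) F"
    using close[of "1/(2*K)"] K by auto
  define r' where "r' = min r r1"
  have r': "r' > 0" "r' \<le> r" "r' \<le> r1" using r1 \<open>r>0\<close> by (auto simp: r'_def)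
  have ev2: "eventually (\<lambda>t. norm (G t z0) < r'/(2*K)) F"
    using tendstoD[OF lim, of "r'/(2*K)"] r' K by (simp add: dist_norm)
  show ?thesis
  proof (rule eventually_mono[OF eventually_conj[OF ev1 ev2]], elim conjE)
    fix t
    assume b1: "\<forall>z\<in>cball z0 r1. \<forall>v. norm (G' t z v - L v) \<le> (1/(2*K)) * norm v"
      and b2: "norm (G t z0) < r'/(2*K)"
    have b1': "norm (G' t z v - L v) \<le> (1/(2*K)) * norm v" if "z \<in> cball z0 r'" for z v
      using b1 that r' by auto
    have mvt: "norm ((G t z - L z) - (G t z0 - L z0)) \<le> (1/(2*K)) * norm (z - z0)"
      if "z \<in> cball z0 r'" for z
    proof (rule differentiable_bound[where S="cball z0 r'" and f="\<lambda>z. G t z - L z"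
           and f'="\<lambda>z v. G' t z v - L v"])
      show "convex (cball z0 r')" by simp
      show "((\<lambda>z. G t z - L z) has_derivative (\<lambda>v. G' t x v - L v)) (at x within cball z0 r')" for x
        by (rule has_derivative_diff[OF has_derivative_at_withinI[OF der] linear_imp_has_derivative[OF L(1)]])
      show "onorm (\<lambda>v. G' t x v - L v) \<le> 1 / (2 * K)" if "x \<in> cball z0 r'" for x
        by (rule onorm_le) (use b1' that in auto)
    qed (use that r' in auto)
    define \<Phi> where "\<Phi> z = z - Li (G t z)" for z
    have cont: "continuous_on (cball z0 r') \<Phi>"
    proof -
      have c1: "continuous_on (cball z0 r') (G t)"
        by (rule continuous_at_imp_continuous_on) (use has_derivative_continuous[OF der] in blast)
      have c2: "continuous_on (cball z0 r') (\<lambda>z. Li (G t z))"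
        by (rule linear_continuous_on_compose[OF c1 Li(1)])
      show ?thesis unfolding \<Phi>_def by (rule continuous_on_diff[OF continuous_on_id c2])
    qed
    have into: "\<Phi> \<in> cball z0 r' \<rightarrow> cball z0 r'"
    proof
      fix z assume z: "z \<in> cball z0 r'"
      have eq: "\<Phi> z - z0 = - Li ((G t z - L z) - (G t z0 - L z0)) - Li (G t z0)"
      proof -
        have "Li (L (z - z0)) = z - z0" using Li(2) by (simp add: pointfree_idE)
        then have "\<Phi> z - z0 = Li (L (z - z0) - G t z)" by (simp add: \<Phi>_def linear_diff[OF Li(1)])
        also have "L (z - z0) - G t z = - ((G t z - L z) - (G t z0 - L z0)) - G t z0"
          using linear_diff[OF L(1), of z z0] by (simp add: algebra_simps)
        also have "Li (- ((G t z - L z) - (G t z0 - L z0)) - G t z0) = - Li ((G t z - L z) - (G t z0 - L z0)) - Li (G t z0)"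
          by (simp add: linear_diff[OF Li(1)] linear_neg[OF Li(1)])
        finally show ?thesis .
      qed
      have "norm (\<Phi> z - z0) \<le> K * ((1/(2*K)) * norm (z - z0)) + K * (r'/(2*K))"
        unfolding eq
        apply (rule order_trans[OF norm_triangle_ineq4])
        apply (rule add_mono)
         apply (simp only: norm_minus_cancel)
         apply (rule order_trans[OF K(2)])
         apply (rule mult_left_mono[OF mvt[OF z]]) using K apply simp
        apply (rule order_trans[OF K(2)])
        using b2 K by (simp add: field_simps)
      also have "\<dots> \<le> r'" using z K by (simp add: dist_norm norm_minus_commute field_simps)
      finally show "\<Phi> z \<in> cball z0 r'" by (simp add: dist_norm norm_minus_commute)
    qed
    obtain z where z: "z \<in> cball z0 r'" "\<Phi> z = z"
      using brouwer[OF compact_cball convex_cball _ cont into] r' by auto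
    have "Li (G t z) = 0" using z(2) by (simp add: \<Phi>_def)
    then have G0: "G t z = 0"
      by (metis LLi linear_0[OF L(1)] pointfree_idE)
    have lin: "linear (G' t z)" using der has_derivative_linear by blast
    have inj: "inj (G' t z)"
    proof (rule injI)
      fix v1 v2 assume "G' t z v1 = G' t z v2"
      then have "G' t z (v1 - v2) = 0" using linear_diff[OF lin] by simp
      define v where "v = v1 - v2"
      have "G' t z v = 0" using \<open>G' t z (v1 - v2) = 0\<close> v_def by simp
      then have "norm (L v) \<le> (1/(2*K)) * norm v" using b1'[OF z(1), of v] by simp
      moreover have "v = Li (L v)" using Li(2) by (simp add: pointfree_idE)
      then have "norm v \<le> K * norm (L v)" using K(2) by metis
      ultimately have "norm v \<le> K * ((1/(2*K)) * norm v)"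
        using K by (meson less_le_not_le mult_left_mono order_trans)
      then have "norm v \<le> norm v / 2" using K by simp
      then have "v = 0" by simp
      then show "v1 = v2" using v_def by simp
    qed
    show "\<exists>z\<in>cball z0 r. G t z = 0 \<and> inj (G' t z)"
      using z(1) r' G0 inj by (intro bexI[of _ z]) auto
  qed
qed



definition rv :: "int^'d::finite \<Rightarrow> real^'d" where "rv a = (\<chi> k. real_of_int (a$k))"

definition esum :: "('d::finite \<Rightarrow> (int^'d) set) \<Rightarrow> ('d \<Rightarrow> int^'d \<Rightarrow> real) \<Rightarrow> real^'d \<Rightarrow> real^'d" where
  "esum A g z = (\<chi> i. \<Sum>a\<in>A i. g i a * exp (rv a \<bullet> z))"

definition esum' :: "('d::finite \<Rightarrow> (int^'d) set) \<Rightarrow> ('d \<Rightarrow> int^'d \<Rightarrow> real) \<Rightarrow> real^'d \<Rightarrow> real^'d \<Rightarrow> real^'d" where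
  "esum' A g z v = (\<chi> i. \<Sum>a\<in>A i. g i a * exp (rv a \<bullet> z) * (rv a \<bullet> v))"

lemma esum_deriv:
  fixes A :: "'d::finite \<Rightarrow> (int^'d) set"
  shows "(esum A g has_derivative esum' A g z) (at z)"
proof (subst has_derivative_componentwise_within, intro ballI)
  fix b :: "real^'d" assume "b \<in> Basis"
  then obtain i where b: "b = axis i 1" by (auto simp: Basis_vec_def)
  have "((\<lambda>x. \<Sum>a\<in>A i. g i a * exp (rv a \<bullet> x)) has_derivative
        (\<lambda>v. \<Sum>a\<in>A i. g i a * ((rv a \<bullet> v) * exp (rv a \<bullet> z)))) (at z)"
    by (intro has_derivative_sum has_derivative_mult_right has_derivative_exp has_derivative_inner_right has_derivative_ident)
  then show "((\<lambda>x. esum A g x \<bullet> b) has_derivative (\<lambda>x. esum' A g z x \<bullet> b)) (at z)"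
    by (simp add: b inner_axis esum_def esum'_def mult_ac)
qed

lemma esum_lim:
  assumes "\<And>i a. ((\<lambda>t. \<gamma> t i a) \<longlongrightarrow> \<gamma>0 i a) F"
  shows "((\<lambda>t. esum A (\<gamma> t) z0) \<longlongrightarrow> esum A \<gamma>0 z0) F"
  unfolding esum_def by (intro tendsto_intros assms)

lemma esum_close:
  fixes \<gamma> :: "'p \<Rightarrow> 'd::finite \<Rightarrow> int^'d \<Rightarrow> real"
  assumes lim: "\<And>i a. ((\<lambda>t. \<gamma> t i a) \<longlongrightarrow> \<gamma>0 i a) F" and "e > 0"
  shows "\<exists>r>0. eventually (\<lambda>t. \<forall>z\<in>cball z0 r. \<forall>v. norm (esum' A (\<gamma> t) z v - esum' A \<gamma>0 z0 v) \<le> e * norm v) F"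
proof -
  define \<Phi> where "\<Phi> p = (\<Sum>i\<in>UNIV. \<Sum>a\<in>A i. \<bar>\<gamma> (fst p) i a * exp (rv a \<bullet> snd p) - \<gamma>0 i a * exp (rv a \<bullet> z0)\<bar> * norm (rv a))" for p
  have "(\<Phi> \<longlongrightarrow> (\<Sum>i\<in>UNIV. \<Sum>a\<in>A i. \<bar>\<gamma>0 i a * exp (rv a \<bullet> z0) - \<gamma>0 i a * exp (rv a \<bullet> z0)\<bar> * norm (rv a))) (F \<times>\<^sub>F nhds z0)"
    unfolding \<Phi>_def
    by (intro tendsto_intros filterlim_compose[OF lim filterlim_fst] filterlim_snd)
  then have "(\<Phi> \<longlongrightarrow> 0) (F \<times>\<^sub>F nhds z0)" by simp
  then have "eventually (\<lambda>p. \<Phi> p < e) (F \<times>\<^sub>F nhds z0)"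
    using order_tendstoD(2) \<open>e > 0\<close> by blast
  then obtain Pf Pg where Pf: "eventually Pf F" and Pg: "eventually Pg (nhds z0)"
    and P: "\<And>x y. Pf x \<Longrightarrow> Pg y \<Longrightarrow> \<Phi> (x, y) < e"
    unfolding eventually_prod_filter by blast
  obtain d where d: "d > 0" "\<And>y. dist y z0 < d \<Longrightarrow> Pg y"
    using Pg unfolding eventually_nhds_metric by blast
  have bound: "norm (esum' A (\<gamma> t) z v - esum' A \<gamma>0 z0 v) \<le> \<Phi> (t, z) * norm v" for t z v
  proof -
    have "norm (esum' A (\<gamma> t) z v - esum' A \<gamma>0 z0 v) \<le> (\<Sum>i\<in>UNIV. \<bar>(esum' A (\<gamma> t) z v - esum' A \<gamma>0 z0 v) $ i\<bar>)"
      by (rule norm_le_l1_cart)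
    also have "\<dots> \<le> (\<Sum>i\<in>UNIV. \<Sum>a\<in>A i. \<bar>\<gamma> t i a * exp (rv a \<bullet> z) - \<gamma>0 i a * exp (rv a \<bullet> z0)\<bar> * norm (rv a) * norm v)"
    proof (rule sum_mono)
      fix i
      have "\<bar>(esum' A (\<gamma> t) z v - esum' A \<gamma>0 z0 v) $ i\<bar> =
            \<bar>\<Sum>a\<in>A i. (\<gamma> t i a * exp (rv a \<bullet> z) - \<gamma>0 i a * exp (rv a \<bullet> z0)) * (rv a \<bullet> v)\<bar>"
        by (simp add: esum'_def sum_subtractf[symmetric] algebra_simps)
      also have "\<dots> \<le> (\<Sum>a\<in>A i. \<bar>(\<gamma> t i a * exp (rv a \<bullet> z) - \<gamma>0 i a * exp (rv a \<bullet> z0)) * (rv a \<bullet> v)\<bar>)"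
        by (rule sum_abs)
      also have "\<dots> \<le> (\<Sum>a\<in>A i. \<bar>\<gamma> t i a * exp (rv a \<bullet> z) - \<gamma>0 i a * exp (rv a \<bullet> z0)\<bar> * norm (rv a) * norm v)"
        by (intro sum_mono) (simp add: abs_mult mult.assoc mult_left_mono Cauchy_Schwarz_ineq2)
      finally show "\<bar>(esum' A (\<gamma> t) z v - esum' A \<gamma>0 z0 v) $ i\<bar> \<le> \<dots>" .
    qed
    also have "\<dots> = \<Phi> (t, z) * norm v"
      by (simp add: \<Phi>_def sum_distrib_right)
    finally show ?thesis .
  qed
  show ?thesis
  proof (intro exI[of _ "d/2"] conjI)
    show "d/2 > 0" using d by simp
    show "eventually (\<lambda>t. \<forall>z\<in>cball z0 (d/2). \<forall>v. norm (esum' A (\<gamma> t) z v - esum' A \<gamma>0 z0 v) \<le> e * norm v) F"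
    proof (rule eventually_mono[OF Pf], intro ballI allI)
      fix t z v assume t: "Pf t" and z: "z \<in> cball z0 (d/2)"
      have "Pg z" using d z by (intro d(2)) (auto simp: dist_commute)
      then have "\<Phi> (t, z) < e" using P t by blast
      then show "norm (esum' A (\<gamma> t) z v - esum' A \<gamma>0 z0 v) \<le> e * norm v"
        using bound[of t z v] by (meson mult_right_mono norm_ge_zero order_trans less_imp_le)
    qed
  qed
qed



lemma indep_rows:
  fixes r :: "'d::finite \<Rightarrow> real^'d"
  assumes indep: "\<And>\<mu>. (\<Sum>i\<in>UNIV. \<mu> i *\<^sub>R r i) = 0 \<Longrightarrow> \<forall>i. \<mu> i = 0"
  shows "(\<forall>v. (\<forall>i. r i \<bullet> v = 0) \<longrightarrow> v = 0) \<and> (\<forall>b. \<exists>z. \<forall>i. r i \<bullet> z = b i)"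
proof -
  define M :: "real^'d^'d" where "M = (\<chi> i. r i)"
  have Mv: "(M *v v) $ i = r i \<bullet> v" for v i
    by (simp add: M_def matrix_vector_mult_def inner_vec_def mult.commute)
  have MTv: "transpose M *v \<mu> = (\<Sum>i\<in>UNIV. (\<mu>$i) *\<^sub>R r i)" for \<mu>
    by (simp add: vec_eq_iff M_def matrix_vector_mult_def transpose_def mult.commute)
  have "inj ((*v) (transpose M))"
  proof (rule injI)
    fix x y assume "transpose M *v x = transpose M *v y"
    then have "transpose M *v (x - y) = 0" by (simp add: matrix_vector_mult_diff_distrib)
    then have "\<forall>i. (x - y) $ i = 0" using indep[of "\<lambda>i. (x - y) $ i"] MTv by simp
    then show "x = y" by (simp add: vec_eq_iff)
  qed
  then have "det (transpose M) \<noteq> 0"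
    using det_nz_iff_inj[of "(*v) (transpose M)"] by simp
  then have inv: "invertible M" by (simp add: invertible_det_nz)
  then obtain B where B: "M ** B = mat 1" "B ** M = mat 1" unfolding invertible_def by blast
  have 1: "v = 0" if "\<forall>i. r i \<bullet> v = 0" for v
  proof -
    have "M *v v = 0" using that Mv by (simp add: vec_eq_iff)
    then have "B *v (M *v v) = 0" by simp
    then show ?thesis by (simp add: matrix_vector_mul_assoc B)
  qed
  have 2: "\<exists>z. \<forall>i. r i \<bullet> z = b i" for b :: "'d \<Rightarrow> real"
  proof -
    define bb :: "real^'d" where "bb = (\<chi> i. b i)"
    have "M *v (B *v bb) = bb" by (simp add: matrix_vector_mul_assoc B)
    then show ?thesis using Mv by (intro exI[of _ "B *v bb"]) (auto simp: vec_eq_iff bb_def)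
  qed
  show ?thesis using 1 2 by blast
qed

lemma cay_pt_inj: "cay_pt a i = cay_pt b j \<longleftrightarrow> a = b \<and> i = j"
proof
  assume h: "cay_pt a i = cay_pt b j"
  then have "axis i (1::real) = axis j 1" by (simp add: cay_pt_def)
  then have "i = j" by (simp add: axis_eq_axis)
  moreover have "a = b" using h by (simp add: cay_pt_def vec_eq_iff)
  ultimately show "a = b \<and> i = j" by simp
qed auto

lemma cay_pt_rv: "cay_pt a i = (rv a, axis i 1)"
  by (simp add: cay_pt_def rv_def)

lemma rv_inj: "rv a = rv b \<longleftrightarrow> a = b"
  by (auto simp: rv_def vec_eq_iff)

lemma cayleyI: "a \<in> A i \<Longrightarrow> cay_pt a i \<in> cayley A"
  by (auto simp: cayley_def)

lemma cayleyE: "q \<in> cayley A \<Longrightarrow> (\<And>a i. a \<in> A i \<Longrightarrow> q = cay_pt a i \<Longrightarrow> P) \<Longrightarrow> P"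
  by (auto simp: cayley_def)

lemma cell_fun:
  assumes "occurs_in_reg_subdiv (cayley A) h S"
  shows "\<exists>w lam. \<forall>i. \<forall>a\<in>A i. rv a \<bullet> w + lam i + h (cay_pt a i) \<ge> 0 \<and>
            (rv a \<bullet> w + lam i + h (cay_pt a i) = 0 \<longleftrightarrow> cay_pt a i \<in> S)"
proof -
  define P where "P = cayley A"
  define Q where "Q = convex hull ((\<lambda>q. (q, h q)) ` P)"
  obtain F where F: "lower_face P h F" and S: "S = {q \<in> P. (q, h q) \<in> F}"
    using assms by (auto simp: occurs_in_reg_subdiv_def P_def)
  obtain u where Fne: "F \<noteq> {}" and u: "snd u > 0" and Fu: "F = {x \<in> Q. \<forall>y\<in>Q. inner u x \<le> inner u y}"
  proof -
    from F have "F \<noteq> {} \<and> (\<exists>u. snd u > 0 \<and> F = {x \<in> Q. \<forall>y\<in>Q. inner u x \<le> inner u y})"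
      unfolding lower_face_def Q_def Let_def by blast
    then show ?thesis using that by blast
  qed
  obtain x0 where x0: "x0 \<in> F" using Fne by blast
  define m where "m = inner u x0"
  have inQ: "(q, h q) \<in> Q" if "q \<in> P" for q
    unfolding Q_def by (rule hull_inc) (use that in auto)
  have key: "inner u (q, h q) \<ge> m \<and> (inner u (q, h q) = m \<longleftrightarrow> q \<in> S)" if q: "q \<in> P" for q
  proof -
    have "m \<le> inner u (q, h q)" using x0 inQ[OF q] by (auto simp: Fu m_def)
    moreover have "(inner u (q, h q) = m) \<longleftrightarrow> (q, h q) \<in> F"
    proof
      assume "inner u (q, h q) = m"
      then show "(q, h q) \<in> F" using x0 inQ[OF q] by (auto simp: Fu m_def)
    next
      assume "(q, h q) \<in> F"
      then have "inner u (q, h q) \<le> m" using x0 by (auto simp: Fu m_def)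
      then show "inner u (q, h q) = m" using \<open>m \<le> inner u (q, h q)\<close> by simp
    qed
    ultimately show ?thesis using q by (auto simp: S)
  qed
  obtain u1 u2 u3 where uu: "u = ((u1, u2), u3)" by (metis prod.collapse)
  have u3: "u3 > 0" using u uu by simp
  define w where "w = (1/u3) *\<^sub>R u1"
  define lam where "lam i = (u2 $ i - m) / u3" for i
  have eq: "rv a \<bullet> w + lam i + h (cay_pt a i) = (inner u (cay_pt a i, h (cay_pt a i)) - m) / u3" for a i
    using u3 by (simp add: uu cay_pt_rv w_def lam_def inner_axis field_simps inner_commute[of u1])
  show ?thesis
  proof (intro exI[of _ w] exI[of _ lam] allI ballI)
    fix i a assume a: "a \<in> A i"
    then have "cay_pt a i \<in> P" by (simp add: P_def cayleyI)
    from key[OF this] u3 show "0 \<le> rv a \<bullet> w + lam i + h (cay_pt a i) \<and> (rv a \<bullet> w + lam i + h (cay_pt a i) = 0) = (cay_pt a i \<in> S)"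
      unfolding eq by (auto simp: divide_simps)
  qed
qed



lemma mixed_indep:
  assumes dep: "\<not> affine_dependent S" and fin: "finite S"
    and p1: "\<And>i. cay_pt (a1 i) i \<in> S" and p2: "\<And>i. cay_pt (a2 i) i \<in> S"
    and ne: "\<And>i. a1 i \<noteq> a2 i"
    and sum0: "(\<Sum>i\<in>UNIV. \<mu> i *\<^sub>R (rv (a1 i) - rv (a2 i))) = 0"
  shows "\<forall>i. \<mu> i = 0"
proof (rule ccontr)
  assume "\<not> (\<forall>i. \<mu> i = 0)"
  then obtain j where j: "\<mu> j \<noteq> 0" by blast
  define U where "U q = (\<Sum>i\<in>UNIV. (if q = cay_pt (a1 i) i then \<mu> i else 0) - (if q = cay_pt (a2 i) i then \<mu> i else 0))" for q
  have s1: "sum U S = 0"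
    unfolding U_def
    by (subst sum.swap) (simp add: sum_subtractf sum.delta[OF fin] p1 p2)
  have s2: "U (cay_pt (a1 j) j) \<noteq> 0"
  proof -
    have "U (cay_pt (a1 j) j) = (\<Sum>i\<in>UNIV. (if j = i then \<mu> i else 0))"
      unfolding U_def by (intro sum.cong) (auto simp: cay_pt_inj ne)
    then show ?thesis using j by simp
  qed
  have s3: "(\<Sum>q\<in>S. U q *\<^sub>R q) = 0"
  proof -
    have "(\<Sum>q\<in>S. U q *\<^sub>R q) = (\<Sum>q\<in>S. \<Sum>i\<in>UNIV. (if q = cay_pt (a1 i) i then \<mu> i *\<^sub>R cay_pt (a1 i) i else 0) - (if q = cay_pt (a2 i) i then \<mu> i *\<^sub>R cay_pt (a2 i) i else 0))"
      unfolding U_def scaleR_sum_left by (intro sum.cong refl) (auto simp: scaleR_diff_left)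
    also have "\<dots> = (\<Sum>i\<in>UNIV. \<mu> i *\<^sub>R cay_pt (a1 i) i - \<mu> i *\<^sub>R cay_pt (a2 i) i)"
      by (subst sum.swap) (simp add: sum_subtractf sum.delta[OF fin] p1 p2)
    also have "\<dots> = 0"
    proof -
      have "fst (\<Sum>i\<in>UNIV. \<mu> i *\<^sub>R cay_pt (a1 i) i - \<mu> i *\<^sub>R cay_pt (a2 i) i) = (\<Sum>i\<in>UNIV. \<mu> i *\<^sub>R (rv (a1 i) - rv (a2 i)))"
        by (simp add: fst_sum cay_pt_rv scaleR_diff_right)
      moreover have "snd (\<Sum>i\<in>UNIV. \<mu> i *\<^sub>R cay_pt (a1 i) i - \<mu> i *\<^sub>R cay_pt (a2 i) i) = 0"
        by (simp add: snd_sum cay_pt_rv)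
      ultimately show ?thesis using sum0 by (simp add: prod_eq_iff)
    qed
    finally show ?thesis .
  qed
  have "affine_dependent S"
    unfolding affine_dependent_explicit_finite[OF fin]
    using s1 s2 s3 p1[of j] by blast
  then show False using dep by simp
qed



lemma monom_pos:
  assumes "\<forall>k. y $ k > 0"
  shows "monom y a = exp (rv a \<bullet> (\<chi> k. ln (y $ k)))"
proof -
  have "monom y a = (\<Prod>k\<in>UNIV. exp (real_of_int (a $ k) * ln (y $ k)))"
    unfolding monom_def using assms by (intro prod.cong refl) (simp add: powr_def less_imp_neq[symmetric])
  also have "\<dots> = exp (\<Sum>k\<in>UNIV. real_of_int (a $ k) * ln (y $ k))"
    by (simp add: exp_sum)
  also have "\<dots> = exp (rv a \<bullet> (\<chi> k. ln (y $ k)))"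
    by (simp add: rv_def inner_vec_def)
  finally show ?thesis .
qed

lemma transfer:
  fixes A :: "'d::finite \<Rightarrow> (int^'d) set"
  assumes t: "t > 0"
    and gam: "\<And>i a. a \<in> A i \<Longrightarrow> \<gamma> i a = c i a * t powr (rv a \<bullet> w + lam i + h (cay_pt a i))"
    and zero: "esum A \<gamma> z = 0" and inj: "inj (esum' A \<gamma> z)"
  shows "nondeg_pos_solution (sys A c h t) (\<chi> k. exp (w$k * ln t + z$k))"
proof -
  define x :: "real^'d" where "x = (\<chi> k. exp (w$k * ln t + z$k))"
  define Zf :: "real^'d \<Rightarrow> real^'d" where "Zf y = (\<chi> k. ln (y $ k) - w $ k * ln t)" for y
  define Zf' :: "real^'d \<Rightarrow> real^'d" where "Zf' v = (\<chi> k. v $ k / x $ k)" for v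
  define Dm :: "real^'d^'d" where "Dm = (\<chi> i j. if i = j then exp (- lam i * ln t) else 0)"
  define Pos :: "(real^'d) set" where "Pos = {y. \<forall>k. y $ k > 0}"
  have Dm: "(Dm *v u) $ i = exp (- lam i * ln t) * u $ i" for u i
  proof -
    have "(Dm *v u) $ i = (\<Sum>j\<in>UNIV. (if i = j then exp (- lam i * ln t) else 0) * u $ j)"
      by (simp add: Dm_def matrix_vector_mult_def)
    also have "\<dots> = (\<Sum>j\<in>UNIV. if i = j then exp (- lam i * ln t) * u $ j else 0)"
      by (intro sum.cong refl) auto
    finally have "(Dm *v u) $ i = (\<Sum>j\<in>UNIV. if i = j then exp (- lam i * ln t) * u $ j else 0)" .
    then show ?thesis by simp
  qed
  have xpos: "x \<in> Pos" by (simp add: x_def Pos_def)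
  have Zx: "Zf x = z" by (simp add: Zf_def x_def vec_eq_iff)
  have openPos: "open Pos"
  proof -
    have "Pos = (\<Inter>k\<in>UNIV. {y. 0 < y $ k})" by (auto simp: Pos_def)
    moreover have "open {y::real^'d. 0 < y $ k}" for k
      by (intro open_Collect_less continuous_intros)
    ultimately show ?thesis by auto
  qed
  have ident: "sys A c h t y = Dm *v esum A \<gamma> (Zf y)" if y: "y \<in> Pos" for y
  proof -
    have lny: "(\<chi> k. ln (y $ k)) = Zf y + ln t *\<^sub>R w" by (simp add: Zf_def vec_eq_iff)
    show ?thesis
    proof (subst vec_eq_iff, intro allI)
      fix i
      have "c i a * t powr h (cay_pt a i) * monom y a = exp (- lam i * ln t) * (\<gamma> i a * exp (rv a \<bullet> Zf y))"
        if a: "a \<in> A i" for a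
      proof -
        have "monom y a = exp (rv a \<bullet> Zf y + ln t * (rv a \<bullet> w))"
          using monom_pos[of y a] y by (simp add: Pos_def lny inner_add_right)
        moreover have "t powr h (cay_pt a i) = exp (h (cay_pt a i) * ln t)" using t by (simp add: powr_def)
        moreover have "\<gamma> i a = c i a * exp ((rv a \<bullet> w + lam i + h (cay_pt a i)) * ln t)"
          using gam[OF a] t by (simp add: powr_def)
        ultimately show ?thesis by (simp add: mult_exp_exp[symmetric] algebra_simps exp_minus_inverse)
      qed
      then show "sys A c h t y $ i = (Dm *v esum A \<gamma> (Zf y)) $ i"
        by (simp add: sys_def Dm esum_def sum_distrib_left)
    qed
  qed
  have sol: "sys A c h t x = 0" using ident[OF xpos] Zx zero by simp
  have dZ: "(Zf has_derivative Zf') (at x)"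
  proof (subst has_derivative_componentwise_within, intro ballI)
    fix b :: "real^'d" assume "b \<in> Basis"
    then obtain k where b: "b = axis k 1" by (auto simp: Basis_vec_def)
    have "((\<lambda>y. ln (y $ k) - w $ k * ln t) has_derivative (\<lambda>v. v $ k * inverse (x $ k))) (at x)"
      using xpos unfolding Pos_def
      by (auto intro!: derivative_eq_intros bounded_linear_imp_has_derivative bounded_linear_vec_nth)
    then show "((\<lambda>y. Zf y \<bullet> b) has_derivative (\<lambda>v. Zf' v \<bullet> b)) (at x)"
      by (simp add: b inner_axis Zf_def Zf'_def divide_inverse)
  qed
  have d1: "((\<lambda>y. Dm *v esum A \<gamma> (Zf y)) has_derivative (\<lambda>v. Dm *v esum' A \<gamma> z (Zf' v))) (at x)"
  proof -
    have "((\<lambda>y. esum A \<gamma> (Zf y)) has_derivative (\<lambda>v. esum' A \<gamma> z (Zf' v))) (at x)"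
      using has_derivative_compose[OF dZ, of "esum A \<gamma>" "esum' A \<gamma> z"] esum_deriv[of A \<gamma> z] Zx by simp
    from has_derivative_compose[OF this linear_imp_has_derivative[OF matrix_vector_mul_linear[of Dm]]]
    show ?thesis .
  qed
  define J where "J v = Dm *v esum' A \<gamma> z (Zf' v)" for v
  have dsys: "(sys A c h t has_derivative J) (at x)"
    unfolding J_def
    by (rule has_derivative_transform_within_open[OF d1 openPos xpos]) (simp add: ident)
  have linJ: "linear J" using dsys has_derivative_linear by blast
  have injJ: "inj J"
  proof (rule injI)
    fix u v assume "J u = J v"
    then have "esum' A \<gamma> z (Zf' u) = esum' A \<gamma> z (Zf' v)"
      by (auto simp: J_def Dm vec_eq_iff)
    then have "Zf' u = Zf' v" using inj by (simp add: inj_eq)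
    then show "u = v" using xpos by (auto simp: Zf'_def vec_eq_iff Pos_def) (metis less_irrefl)
  qed
  have "jacobian (sys A c h t) (at x) = matrix J"
    unfolding jacobian_def using frechet_derivative_at[OF dsys] by simp
  then have "det (jacobian (sys A c h t) (at x)) \<noteq> 0"
    using det_nz_iff_inj[OF linJ] injJ by simp
  moreover have "sys A c h t differentiable (at x)" using dsys by (auto simp: differentiable_def)
  ultimately show ?thesis
    using sol xpos unfolding nondeg_pos_solution_def x_def[symmetric] Pos_def by simp
qed



lemma one_simplex:
  fixes A :: "'d::finite \<Rightarrow> (int^'d) set"
  assumes finA: "\<And>i. finite (A i)"
    and mx: "mixed_simplex A S" and pd: "pos_decorated A c S"
    and oc: "occurs_in_reg_subdiv (cayley A) h S"
  shows "\<exists>w z0 lam. (\<forall>i. \<forall>a\<in>A i. rv a \<bullet> w + lam i + h (cay_pt a i) \<ge> 0 \<and>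
            (rv a \<bullet> w + lam i + h (cay_pt a i) = 0 \<longleftrightarrow> cay_pt a i \<in> S)) \<and>
     eventually (\<lambda>t. \<exists>z\<in>cball z0 1. nondeg_pos_solution (sys A c h t) (\<chi> k. exp (w$k * ln t + z$k))) (at_right 0)"
proof -
  obtain w lam where wl: "\<And>i a. a \<in> A i \<Longrightarrow> rv a \<bullet> w + lam i + h (cay_pt a i) \<ge> 0 \<and>
            (rv a \<bullet> w + lam i + h (cay_pt a i) = 0 \<longleftrightarrow> cay_pt a i \<in> S)"
    using cell_fun[OF oc] by blast
  define e where "e i a = rv a \<bullet> w + lam i + h (cay_pt a i)" for i a
  have "\<forall>i. \<exists>p. {a. a \<in> A i \<and> cay_pt a i \<in> S} = {fst p, snd p} \<and> fst p \<noteq> snd p \<and> c i (fst p) * c i (snd p) < 0"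
    using pd unfolding pos_decorated_def by (metis fst_conv snd_conv)
  then obtain pp where pp: "\<And>i. {a. a \<in> A i \<and> cay_pt a i \<in> S} = {fst (pp i), snd (pp i)} \<and> fst (pp i) \<noteq> snd (pp i) \<and> c i (fst (pp i)) * c i (snd (pp i)) < 0"
    by metis
  define a1 where "a1 i = fst (pp i)" for i
  define a2 where "a2 i = snd (pp i)" for i
  have cellset: "{a. a \<in> A i \<and> cay_pt a i \<in> S} = {a1 i, a2 i}" for i using pp by (simp add: a1_def a2_def)
  have ne: "a1 i \<noteq> a2 i" for i using pp by (simp add: a1_def a2_def)
  have cneg: "c i (a1 i) * c i (a2 i) < 0" for i using pp by (simp add: a1_def a2_def)
  have a1A: "a1 i \<in> A i" and a2A: "a2 i \<in> A i" and a1S: "cay_pt (a1 i) i \<in> S" and a2S: "cay_pt (a2 i) i \<in> S" for i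
    using cellset[of i] by blast+
  have ecell: "a \<in> A i \<Longrightarrow> e i a = 0 \<longleftrightarrow> a = a1 i \<or> a = a2 i" for i a
    using wl[of a i] cellset[of i] unfolding e_def by blast
  have epos: "a \<in> A i \<Longrightarrow> e i a \<ge> 0" for i a using wl unfolding e_def by blast
  have simp_S: "\<not> affine_dependent S" "finite S"
    using mx by (auto simp: mixed_simplex_def is_simplex_def)
  define r where "r i = rv (a1 i) - rv (a2 i)" for i
  have indep: "(\<Sum>i\<in>UNIV. \<mu> i *\<^sub>R r i) = 0 \<Longrightarrow> \<forall>i. \<mu> i = 0" for \<mu>
    unfolding r_def by (rule mixed_indep[OF simp_S a1S a2S ne])
  have IR: "(\<forall>v. (\<forall>i. r i \<bullet> v = 0) \<longrightarrow> v = 0) \<and> (\<forall>b. \<exists>z. \<forall>i. r i \<bullet> z = b i)"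
    by (rule indep_rows) (rule indep)
  have ker: "v = 0" if "\<forall>i. r i \<bullet> v = 0" for v using IR that by blast
  obtain z0 where z0: "\<And>i. r i \<bullet> z0 = ln (- c i (a2 i) / c i (a1 i))"
    using IR[THEN conjunct2, rule_format, of "\<lambda>i. ln (- c i (a2 i) / c i (a1 i))"] by blast
  define \<gamma> where "\<gamma> t i a = (if a \<in> A i then c i a * t powr e i a else 0)" for t :: real and i a
  define \<gamma>0 where "\<gamma>0 i a = (if a \<in> A i \<and> e i a = 0 then c i a else 0)" for i a
  have lim: "((\<lambda>t. \<gamma> t i a) \<longlongrightarrow> \<gamma>0 i a) (at_right 0)" for i a
  proof (cases "a \<in> A i")
    case False then show ?thesis by (simp add: \<gamma>_def \<gamma>0_def)
  next
    case True
    show ?thesis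
    proof (cases "e i a = 0")
      case True
      have "eventually (\<lambda>t. c i a = \<gamma> t i a) (at_right 0)"
        using eventually_at_right_less[of "0::real"] by eventually_elim (use True \<open>a \<in> A i\<close> in \<open>simp add: \<gamma>_def\<close>)
      then have "((\<lambda>t. \<gamma> t i a) \<longlongrightarrow> c i a) (at_right 0)"
        by (rule Lim_transform_eventually[OF tendsto_const])
      then show ?thesis using True \<open>a \<in> A i\<close> by (simp add: \<gamma>0_def)
    next
      case False
      then have "e i a > 0" using epos[OF True] by simp
      have "((\<lambda>t. t powr e i a) \<longlongrightarrow> 0) (at_right 0)"
        by (rule tendsto_zero_powrI[OF tendsto_ident_at tendsto_const])
           (use \<open>e i a > 0\<close> eventually_at_right_less[of "0::real"] in \<open>auto elim: eventually_mono\<close>)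
      then have "((\<lambda>t. c i a * t powr e i a) \<longlongrightarrow> c i a * 0) (at_right 0)"
        by (intro tendsto_mult tendsto_const)
      then show ?thesis using False True by (simp add: \<gamma>_def \<gamma>0_def)
    qed
  qed
  have sum2: "(\<Sum>a\<in>A i. \<gamma>0 i a * f a) = c i (a1 i) * f (a1 i) + c i (a2 i) * f (a2 i)" for i f
  proof -
    have "(\<Sum>a\<in>A i. \<gamma>0 i a * f a) = (\<Sum>a\<in>A i. if a \<in> {a1 i, a2 i} then c i a * f a else 0)"
      by (intro sum.cong refl) (auto simp: \<gamma>0_def ecell)
    also have "\<dots> = (\<Sum>a\<in>A i \<inter> {a1 i, a2 i}. c i a * f a)"
      by (simp add: sum.inter_restrict[OF finA])
    also have "A i \<inter> {a1 i, a2 i} = {a1 i, a2 i}" using a1A a2A by auto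
    finally show ?thesis using ne[of i] by simp
  qed
  define E1 where "E1 i = exp (rv (a1 i) \<bullet> z0)" for i
  define E2 where "E2 i = exp (rv (a2 i) \<bullet> z0)" for i
  have binom: "c i (a2 i) * E2 i = - (c i (a1 i) * E1 i)" for i
  proof -
    have q: "- c i (a2 i) / c i (a1 i) > 0" using cneg[of i]
      by (auto simp: mult_less_0_iff divide_pos_neg divide_neg_pos zero_less_divide_iff)
    have "E1 i = exp (r i \<bullet> z0) * E2 i"
      by (simp add: E1_def E2_def r_def inner_diff_left flip: exp_add)
    also have "\<dots> = (- c i (a2 i) / c i (a1 i)) * E2 i" using z0[of i] q by simp
    finally have "E1 i = (- c i (a2 i) / c i (a1 i)) * E2 i" .
    moreover have "c i (a1 i) \<noteq> 0" using cneg[of i] by auto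
    ultimately show ?thesis by (simp add: field_simps)
  qed
  have G0: "esum A \<gamma>0 z0 = 0"
    by (simp add: vec_eq_iff esum_def sum2 binom[unfolded E1_def E2_def])
  define L where "L = esum' A \<gamma>0 z0"
  have Lform: "L v $ i = c i (a1 i) * E1 i * (r i \<bullet> v)" for v i
  proof -
    have "L v $ i = c i (a1 i) * E1 i * (rv (a1 i) \<bullet> v) + c i (a2 i) * E2 i * (rv (a2 i) \<bullet> v)"
      by (simp add: L_def esum'_def mult.assoc sum2 E1_def E2_def)
    also have "\<dots> = c i (a1 i) * E1 i * (rv (a1 i) \<bullet> v) + (- (c i (a1 i) * E1 i)) * (rv (a2 i) \<bullet> v)"
      by (simp only: binom)
    also have "\<dots> = c i (a1 i) * E1 i * (r i \<bullet> v)"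
      by (simp add: r_def inner_diff_left right_diff_distrib)
    finally show ?thesis .
  qed
  have linL: "linear L" unfolding L_def using esum_deriv has_derivative_linear by blast
  have injL: "inj L"
  proof (rule injI)
    fix u v assume "L u = L v"
    then have "L (u - v) = 0" using linear_diff[OF linL] by simp
    then have "\<forall>i. r i \<bullet> (u - v) = 0"
      using cneg by (auto simp: vec_eq_iff Lform E1_def) (metis mult_zero_left less_irrefl)
    then show "u = v" using ker by fastforce
  qed
  have ev: "eventually (\<lambda>t. \<exists>z\<in>cball z0 1. esum A (\<gamma> t) z = 0 \<and> inj (esum' A (\<gamma> t) z)) (at_right 0)"
  proof (rule persist[OF linL injL esum_deriv])
    show "\<exists>r>0. eventually (\<lambda>t. \<forall>z\<in>cball z0 r. \<forall>v. norm (esum' A (\<gamma> t) z v - L v) \<le> e * norm v) (at_right 0)"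
      if "e > 0" for e
      unfolding L_def by (rule esum_close[OF lim that])
    show "((\<lambda>t. esum A (\<gamma> t) z0) \<longlongrightarrow> 0) (at_right 0)"
      using esum_lim[of \<gamma> \<gamma>0 "at_right 0" A z0, OF lim] G0 by simp
  qed simp
  have "eventually (\<lambda>t. \<exists>z\<in>cball z0 1. nondeg_pos_solution (sys A c h t) (\<chi> k. exp (w$k * ln t + z$k))) (at_right 0)"
    using ev eventually_at_right_less[of "0::real"]
  proof eventually_elim
    case (elim t)
    then obtain z where z: "z \<in> cball z0 1" "esum A (\<gamma> t) z = 0" "inj (esum' A (\<gamma> t) z)" by blast
    have "nondeg_pos_solution (sys A c h t) (\<chi> k. exp (w$k * ln t + z$k))"
      by (rule transfer[where lam=lam, OF \<open>t > 0\<close> _ z(2) z(3)]) (simp add: \<gamma>_def e_def)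
    then show ?case using z(1) by blast
  qed
  then show ?thesis using wl by blast
qed



lemma w_determines:
  assumes sub: "S \<subseteq> cayley A" "S' \<subseteq> cayley A"
    and ch: "\<forall>i. \<forall>a\<in>A i. rv a \<bullet> w + lam i + h (cay_pt a i) \<ge> 0 \<and>
            (rv a \<bullet> w + lam i + h (cay_pt a i) = 0 \<longleftrightarrow> cay_pt a i \<in> S)"
    and ch': "\<forall>i. \<forall>a\<in>A i. rv a \<bullet> w + lam' i + h (cay_pt a i) \<ge> 0 \<and>
            (rv a \<bullet> w + lam' i + h (cay_pt a i) = 0 \<longleftrightarrow> cay_pt a i \<in> S')"
    and ne: "\<And>i. \<exists>a\<in>A i. cay_pt a i \<in> S" and ne': "\<And>i. \<exists>a\<in>A i. cay_pt a i \<in> S'"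
  shows "S = S'"
proof -
  have le1: "lam i \<le> lam' i" for i
  proof -
    obtain a where "a \<in> A i" "cay_pt a i \<in> S" using ne by blast
    then show ?thesis using ch ch' by force
  qed
  have le2: "lam' i \<le> lam i" for i
  proof -
    obtain a where "a \<in> A i" "cay_pt a i \<in> S'" using ne' by blast
    then show ?thesis using ch ch' by force
  qed
  have eq: "lam = lam'" using le1 le2 by (intro ext) (meson antisym)
  show ?thesis
  proof (intro set_eqI iffI)
    fix q assume q: "q \<in> S"
    then obtain a i where "a \<in> A i" "q = cay_pt a i" using sub by (blast elim: cayleyE)
    then show "q \<in> S'" using q ch ch' eq by blast
  next
    fix q assume q: "q \<in> S'"
    then obtain a i where "a \<in> A i" "q = cay_pt a i" using sub by (blast elim: cayleyE)
    then show "q \<in> S" using q ch ch' eq by blast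
  qed
qed

lemma sep:
  fixes w w' :: "real^'d::finite"
  assumes "w \<noteq> w'"
  shows "eventually (\<lambda>t. \<forall>z\<in>cball z0 1. \<forall>z'\<in>cball z0' 1.
           (\<chi> k. exp (w$k * ln t + z$k)) \<noteq> (\<chi> k. exp (w'$k * ln t + z'$k))) (at_right 0)"
proof -
  obtain k where k: "w$k \<noteq> w'$k" using assms by (auto simp: vec_eq_iff)
  define d where "d = \<bar>w$k - w'$k\<bar>"
  have d: "d > 0" using k by (simp add: d_def)
  define B where "B = \<bar>z0$k - z0'$k\<bar> + 2"
  have "eventually (\<lambda>t. ln t \<le> - (B/d) - 1) (at_right (0::real))"
    using ln_at_0 unfolding filterlim_at_bot by blast
  then show ?thesis
  proof eventually_elim
    case (elim t)
    show ?case
    proof (intro ballI)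
      fix z z' assume z: "z \<in> cball z0 1" and z': "z' \<in> cball z0' 1"
      show "(\<chi> k. exp (w$k * ln t + z$k)) \<noteq> (\<chi> k. exp (w'$k * ln t + z'$k))"
      proof
        assume "(\<chi> k. exp (w$k * ln t + z$k)) = (\<chi> k. exp (w'$k * ln t + z'$k))"
        then have "exp (w$k * ln t + z$k) = exp (w'$k * ln t + z'$k)"
          by (drule_tac arg_cong[where f="\<lambda>v. v $ k"]) simp
        then have "w$k * ln t + z$k = w'$k * ln t + z'$k" by simp
        then have e: "(w$k - w'$k) * ln t = z'$k - z$k" by (simp add: left_diff_distrib)
        have n1: "norm (z - z0) \<le> 1" using z by (simp add: mem_cball dist_norm norm_minus_commute)
        have n2: "norm (z' - z0') \<le> 1" using z' by (simp add: mem_cball dist_norm norm_minus_commute)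
        have c1: "\<bar>z$k - z0$k\<bar> \<le> 1" using component_le_norm_cart[of "z - z0" k] n1 by simp
        have c2: "\<bar>z'$k - z0'$k\<bar> \<le> 1" using component_le_norm_cart[of "z' - z0'" k] n2 by simp
        have "\<bar>z'$k - z$k\<bar> \<le> B" unfolding B_def using c1 c2 by linarith
        moreover have "d * \<bar>ln t\<bar> = \<bar>z'$k - z$k\<bar>" unfolding d_def abs_mult[symmetric] e ..
        ultimately have A1: "d * \<bar>ln t\<bar> \<le> B" by linarith
        have "B/d + 1 \<le> \<bar>ln t\<bar>" using elim by linarith
        then have "d * (B/d + 1) \<le> d * \<bar>ln t\<bar>" using d by (intro mult_left_mono) auto
        moreover have "d * (B/d + 1) = B + d" using d by (simp add: field_simps)
        ultimately show False using d A1 by linarith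
      qed
    qed
  qed
qed

lemma part1:
  fixes A :: "'d::finite \<Rightarrow> (int^'d) set"
  assumes finA: "\<And>i. finite (A i)" and finD: "finite D"
    and DS: "\<forall>S\<in>D. mixed_simplex A S \<and> pos_decorated A c S \<and> occurs_in_reg_subdiv (cayley A) h S"
  shows "many_solutions A c h (card D)"
proof -
  define X :: "real^'d \<Rightarrow> real \<Rightarrow> real^'d \<Rightarrow> real^'d" where "X w t z = (\<chi> k. exp (w$k * ln t + z$k))" for w t z
  have "\<forall>S\<in>D. \<exists>p. (\<forall>i. \<forall>a\<in>A i. rv a \<bullet> fst p + snd (snd p) i + h (cay_pt a i) \<ge> 0 \<and>
            (rv a \<bullet> fst p + snd (snd p) i + h (cay_pt a i) = 0 \<longleftrightarrow> cay_pt a i \<in> S)) \<and>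
     eventually (\<lambda>t. \<exists>z\<in>cball (fst (snd p)) 1. nondeg_pos_solution (sys A c h t) (X (fst p) t z)) (at_right 0)" (is "\<forall>S\<in>D. \<exists>p. ?P S p")
  proof
    fix S assume "S \<in> D"
    then obtain w z0 lam where "(\<forall>i. \<forall>a\<in>A i. rv a \<bullet> w + lam i + h (cay_pt a i) \<ge> 0 \<and>
            (rv a \<bullet> w + lam i + h (cay_pt a i) = 0 \<longleftrightarrow> cay_pt a i \<in> S)) \<and>
     eventually (\<lambda>t. \<exists>z\<in>cball z0 1. nondeg_pos_solution (sys A c h t) (\<chi> k. exp (w$k * ln t + z$k))) (at_right 0)"
      using one_simplex[of A S c h, OF finA] DS \<open>S \<in> D\<close> by blast
    then show "\<exists>p. ?P S p" unfolding X_def by (intro exI[of _ "(w, z0, lam)"]) simp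
  qed
  then obtain f where f: "\<forall>S\<in>D. (\<forall>i. \<forall>a\<in>A i. rv a \<bullet> fst (f S) + snd (snd (f S)) i + h (cay_pt a i) \<ge> 0 \<and>
            (rv a \<bullet> fst (f S) + snd (snd (f S)) i + h (cay_pt a i) = 0 \<longleftrightarrow> cay_pt a i \<in> S)) \<and>
     eventually (\<lambda>t. \<exists>z\<in>cball (fst (snd (f S))) 1. nondeg_pos_solution (sys A c h t) (X (fst (f S)) t z)) (at_right 0)"
    by (rule bchoice[elim_format]) blast
  define W where "W S = fst (f S)" for S
  define Z where "Z S = fst (snd (f S))" for S
  have Wne: "W S \<noteq> W S'" if "S \<in> D" "S' \<in> D" "S \<noteq> S'" for S S'
  proof
    assume eqW: "W S = W S'"
    have sub: "S \<subseteq> cayley A" "S' \<subseteq> cayley A"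
      using DS that by (auto simp: mixed_simplex_def is_simplex_def)
    have ne: "\<exists>a\<in>A i. cay_pt a i \<in> T" if "T \<in> D" for T i
    proof -
      have "card {a. a \<in> A i \<and> cay_pt a i \<in> T} = 2" using DS that by (auto simp: mixed_simplex_def)
      then have "{a. a \<in> A i \<and> cay_pt a i \<in> T} \<noteq> {}" by (metis card.empty zero_neq_numeral)
      then show ?thesis by blast
    qed
    have fS: "\<forall>i. \<forall>a\<in>A i. rv a \<bullet> W S + snd (snd (f S)) i + h (cay_pt a i) \<ge> 0 \<and>
            (rv a \<bullet> W S + snd (snd (f S)) i + h (cay_pt a i) = 0 \<longleftrightarrow> cay_pt a i \<in> S)"
      using f that(1) unfolding W_def by blast
    have fS': "\<forall>i. \<forall>a\<in>A i. rv a \<bullet> W S + snd (snd (f S')) i + h (cay_pt a i) \<ge> 0 \<and>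
            (rv a \<bullet> W S + snd (snd (f S')) i + h (cay_pt a i) = 0 \<longleftrightarrow> cay_pt a i \<in> S')"
      using f that(2) eqW unfolding W_def by simp
    have "S = S'"
      by (rule w_determines[OF sub fS fS' ne[OF that(1)] ne[OF that(2)]])
    then show False using that by simp
  qed
  have ev1: "eventually (\<lambda>t. \<forall>S\<in>D. \<exists>z\<in>cball (Z S) 1. nondeg_pos_solution (sys A c h t) (X (W S) t z)) (at_right 0)"
    by (rule eventually_ball_finite[OF finD]) (use f in \<open>simp add: W_def Z_def\<close>)
  have ev2: "eventually (\<lambda>t. \<forall>S\<in>D. \<forall>S'\<in>D. S \<noteq> S' \<longrightarrow> (\<forall>z\<in>cball (Z S) 1. \<forall>z'\<in>cball (Z S') 1. X (W S) t z \<noteq> X (W S') t z')) (at_right 0)"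
  proof (intro eventually_ball_finite[OF finD] ballI)
    fix S S' assume "S \<in> D" "S' \<in> D"
    show "eventually (\<lambda>t. S \<noteq> S' \<longrightarrow> (\<forall>z\<in>cball (Z S) 1. \<forall>z'\<in>cball (Z S') 1. X (W S) t z \<noteq> X (W S') t z')) (at_right 0)"
    proof (cases "S = S'")
      case False
      then show ?thesis using sep[OF Wne[OF \<open>S \<in> D\<close> \<open>S' \<in> D\<close> False], of "Z S" "Z S'"]
        by (simp add: X_def)
    qed simp
  qed
  define Q where "Q t = ((\<forall>S\<in>D. \<exists>z\<in>cball (Z S) 1. nondeg_pos_solution (sys A c h t) (X (W S) t z)) \<and>
      (\<forall>S\<in>D. \<forall>S'\<in>D. S \<noteq> S' \<longrightarrow> (\<forall>z\<in>cball (Z S) 1. \<forall>z'\<in>cball (Z S') 1. X (W S) t z \<noteq> X (W S') t z')))" for t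
  have evQ: "eventually Q (at_right 0)"
    unfolding Q_def by (rule eventually_conj[OF ev1 ev2])
  obtain b :: real where b: "b > 0" and bQ: "\<forall>y>0. y < b \<longrightarrow> Q y"
    using evQ unfolding eventually_at_right_field by blast
  have bP: "(\<forall>S\<in>D. \<exists>z\<in>cball (Z S) 1. nondeg_pos_solution (sys A c h t) (X (W S) t z)) \<and>
      (\<forall>S\<in>D. \<forall>S'\<in>D. S \<noteq> S' \<longrightarrow> (\<forall>z\<in>cball (Z S) 1. \<forall>z'\<in>cball (Z S') 1. X (W S) t z \<noteq> X (W S') t z'))"
    if "0 < t" "t < b" for t
    using bQ that unfolding Q_def by blast
  show ?thesis
    unfolding many_solutions_def
  proof (intro exI[of _ b] conjI allI impI)
    show "b > 0" by fact
    fix t assume t: "0 < t \<and> t < b"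
    have P1: "\<forall>S\<in>D. \<exists>z. z \<in> cball (Z S) 1 \<and> nondeg_pos_solution (sys A c h t) (X (W S) t z)"
      using conjunct1[OF bP[OF conjunct1[OF t] conjunct2[OF t]]] by blast
    have P2: "\<forall>S\<in>D. \<forall>S'\<in>D. S \<noteq> S' \<longrightarrow> (\<forall>z\<in>cball (Z S) 1. \<forall>z'\<in>cball (Z S') 1. X (W S) t z \<noteq> X (W S') t z')"
      using conjunct2[OF bP[OF conjunct1[OF t] conjunct2[OF t]]] .
    obtain zz where zz: "\<forall>S\<in>D. zz S \<in> cball (Z S) 1 \<and> nondeg_pos_solution (sys A c h t) (X (W S) t (zz S))"
      using bchoice[OF P1] by blast
    define Xs where "Xs = (\<lambda>S. X (W S) t (zz S)) ` D"
    have inj: "inj_on (\<lambda>S. X (W S) t (zz S)) D"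
    proof (rule inj_onI, rule ccontr)
      fix S S' assume S: "S \<in> D" "S' \<in> D" "X (W S) t (zz S) = X (W S') t (zz S')" "S \<noteq> S'"
      have "zz S \<in> cball (Z S) 1" "zz S' \<in> cball (Z S') 1" using zz S(1,2) by auto
      then have "X (W S) t (zz S) \<noteq> X (W S') t (zz S')" using P2 S(1,2,4) by blast
      then show False using S(3) by simp
    qed
    have "finite Xs" using finD by (simp add: Xs_def)
    moreover have "card Xs = card D" using card_image[OF inj] by (simp add: Xs_def)
    moreover have "\<forall>x\<in>Xs. nondeg_pos_solution (sys A c h t) x" using zz by (auto simp: Xs_def)
    ultimately show "\<exists>X. finite X \<and> card D \<le> card X \<and> (\<forall>x\<in>X. nondeg_pos_solution (sys A c h t) x)"
      by (intro exI[of _ Xs]) simp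
  qed
qed



lemma occurs_from_functional:
  fixes P S :: "'d::finite pt set"
  assumes SP: "S \<subseteq> P" and Sne: "S \<noteq> {}"
    and ge: "\<And>q. q \<in> P \<Longrightarrow> nn \<bullet> q + h q \<ge> c"
    and eq: "\<And>q. q \<in> P \<Longrightarrow> nn \<bullet> q + h q = c \<longleftrightarrow> q \<in> S"
  shows "occurs_in_reg_subdiv P h S"
proof -
  define Q where "Q = convex hull ((\<lambda>q. (q, h q)) ` P)"
  define u :: "'d pt \<times> real" where "u = (nn, 1)"
  have inn: "inner u (q, r) = nn \<bullet> q + r" for q r by (simp add: u_def)
  have Qge: "inner u y \<ge> c" if "y \<in> Q" for y
  proof -
    have "Q \<subseteq> {y. inner u y \<ge> c}"
      unfolding Q_def by (rule hull_minimal) (use ge in \<open>auto simp: inn convex_halfspace_ge\<close>)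
    then show ?thesis using that by blast
  qed
  have inQ: "(q, h q) \<in> Q" if "q \<in> P" for q
    unfolding Q_def by (rule hull_inc) (use that in auto)
  define F where "F = {x \<in> Q. \<forall>y\<in>Q. inner u x \<le> inner u y}"
  have memF: "(q, h q) \<in> F \<longleftrightarrow> q \<in> S" if q: "q \<in> P" for q
  proof
    assume "(q, h q) \<in> F"
    moreover obtain s where s: "s \<in> S" using Sne by blast
    ultimately have "inner u (q, h q) \<le> inner u (s, h s)" using inQ SP unfolding F_def by blast
    then have "nn \<bullet> q + h q \<le> c" using eq[of s] s SP by (auto simp: inn)
    then show "q \<in> S" using ge[OF q] eq[OF q] by simp
  next
    assume "q \<in> S"
    then have "inner u (q, h q) = c" using eq[OF q] by (simp add: inn)
    then show "(q, h q) \<in> F" using Qge inQ[OF q] unfolding F_def by auto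
  qed
  have "lower_face P h F"
    unfolding lower_face_def Let_def
  proof (intro conjI exI[of _ u])
    obtain s where s: "s \<in> S" using Sne by blast
    then show "F \<noteq> {}" using memF[of s] SP by blast
    show "snd u > 0" by (simp add: u_def)
    show "F = {x \<in> convex hull (\<lambda>q. (q, h q)) ` P. \<forall>y\<in>convex hull (\<lambda>q. (q, h q)) ` P. inner u x \<le> inner u y}"
      by (simp add: F_def Q_def)
  qed
  moreover have "S = {q \<in> P. (q, h q) \<in> F}" using memF SP by blast
  ultimately show ?thesis unfolding occurs_in_reg_subdiv_def by blast
qed

definition ones :: "real^'d::finite" where "ones = (\<chi> i. 1)"

lemma cayley_hyp: "cayley A \<subseteq> {x. (0, ones) \<bullet> x = 1}"
proof
  fix q assume "q \<in> cayley A"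
  then obtain a i where "q = cay_pt a i" by (auto simp: cayley_def)
  then show "q \<in> {x. (0, ones) \<bullet> x = 1}"
    by (simp add: cay_pt_rv ones_def inner_axis)
qed

lemma mixed_aff_hull:
  fixes A :: "'d::finite \<Rightarrow> (int^'d) set"
  assumes "is_simplex (cayley A) S" and "q \<in> cayley A"
  shows "q \<in> affine hull S"
proof -
  define H :: "'d pt set" where "H = {x. (0, ones) \<bullet> x = 1}"
  have SH: "S \<subseteq> H" using assms(1) cayley_hyp unfolding H_def is_simplex_def by blast
  have ind: "\<not> affine_dependent S" and cS: "card S = 2 * CARD('d)" and fS: "finite S"
    using assms(1) by (auto simp: is_simplex_def)
  have "of_nat (card S) = aff_dim S + 1" by (rule aff_dim_affine_independent[OF ind])
  then have adS: "aff_dim S = int (2 * CARD('d)) - 1" using cS by simp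
  have "ones \<noteq> (0::real^'d)" by (simp add: ones_def vec_eq_iff)
  then have "(0::real^'d, ones::real^'d) \<noteq> 0" by (simp add: zero_prod_def)
  then have adH: "aff_dim H = int (2 * CARD('d)) - 1"
  proof -
    have "CARD('d) \<ge> 1" by (simp add: Suc_leI)
    then have e: "int (CARD('d) + CARD('d) - Suc 0) = 2 * int CARD('d) - 1" by linarith
    show ?thesis unfolding H_def using \<open>(0, ones) \<noteq> 0\<close> e by (subst aff_dim_hyperplane) auto
  qed
  have "S \<noteq> {}" using cS by auto
  have "affine hull S = H"
  proof (rule affine_dim_equal)
    show "affine (affine hull S)" by simp
    show "affine H" unfolding H_def by (rule affine_hyperplane)
    show "affine hull S \<noteq> {}" using \<open>S \<noteq> {}\<close> by simp
    show "affine hull S \<subseteq> H" by (rule hull_minimal[OF SH]) (simp add: H_def affine_hyperplane)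
    show "aff_dim (affine hull S) = aff_dim H" using adS adH by simp
  qed
  then show ?thesis using assms(2) cayley_hyp unfolding H_def by blast
qed



lemma ell_comb:
  fixes n t0 :: "'a::real_inner"
  assumes "finite X" "sum \<beta> X = 1"
  shows "n \<bullet> ((\<Sum>q\<in>X. \<beta> q *\<^sub>R q) - t0) = (\<Sum>q\<in>X. \<beta> q * (n \<bullet> (q - t0)))"
proof -
  have "(\<Sum>q\<in>X. \<beta> q *\<^sub>R q) - t0 = (\<Sum>q\<in>X. \<beta> q *\<^sub>R (q - t0))"
    using assms by (simp add: scaleR_diff_right sum_subtractf scaleR_sum_left[symmetric])
  then show ?thesis by (simp add: inner_sum_right)
qed

lemma finite_cayley:
  assumes "\<And>i. finite (A i)"
  shows "finite (cayley A)"
proof -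
  have "cayley A \<subseteq> (\<Union>i. (\<lambda>a. cay_pt a i) ` A i)" by (auto simp: cayley_def)
  moreover have "finite (\<Union>i. (\<lambda>a. cay_pt a i) ` A i)" using assms by simp
  ultimately show ?thesis by (rule finite_subset)
qed

lemma part2_h:
  fixes A :: "'d::finite \<Rightarrow> (int^'d) set"
  assumes finA: "\<And>i. finite (A i)"
    and s1: "is_simplex (cayley A) S1" and s2: "is_simplex (cayley A) S2"
    and neq: "S1 \<noteq> S2" and sf: "share_facet S1 S2"
  shows "\<exists>h. occurs_in_reg_subdiv (cayley A) h S1 \<and> occurs_in_reg_subdiv (cayley A) h S2"
proof -
  define P where "P = cayley A"
  have ind1: "\<not> affine_dependent S1" and fin1: "finite S1" and sub1: "S1 \<subseteq> P" and c1: "card S1 = 2 * CARD('d)"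
    using s1 by (auto simp: is_simplex_def P_def)
  have ind2: "\<not> affine_dependent S2" and fin2: "finite S2" and sub2: "S2 \<subseteq> P"
    using s2 by (auto simp: is_simplex_def P_def)
  define Fc where "Fc = convex hull S1 \<inter> convex hull S2"
  obtain p1 where p1: "p1 \<in> S1" and Fc1: "Fc = convex hull (S1 - {p1})"
    using sf ind1 unfolding share_facet_def Fc_def by (auto simp: facet_of_convex_hull_affine_independent)
  obtain p2 where p2: "p2 \<in> S2" and Fc2: "Fc = convex hull (S2 - {p2})"
    using sf ind2 unfolding share_facet_def Fc_def by (auto simp: facet_of_convex_hull_affine_independent)
  define T where "T = S1 - {p1}"
  have indT1: "\<not> affine_dependent (S1 - {p1})" using ind1 affine_dependent_subset by blast
  have indT2: "\<not> affine_dependent (S2 - {p2})" using ind2 affine_dependent_subset by blast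
  have T2: "S2 - {p2} = T"
  proof -
    have "x \<in> S1 - {p1} \<longleftrightarrow> x \<in> S2 - {p2}" for x
      using extreme_point_of_convex_hull_affine_independent[OF indT1, of x]
            extreme_point_of_convex_hull_affine_independent[OF indT2, of x] Fc1 Fc2 by simp
    then show ?thesis unfolding T_def by blast
  qed
  have S1T: "S1 = insert p1 T" and p1T: "p1 \<notin> T" using p1 by (auto simp: T_def)
  have S2T: "S2 = insert p2 T" and p2T: "p2 \<notin> T" using p2 T2 by auto
  have finT: "finite T" using fin1 by (simp add: T_def)
  have cT: "card T = 2 * CARD('d) - 1" using c1 fin1 p1 by (simp add: T_def)
  have Tne: "T \<noteq> {}"
  proof -
    have "CARD('d) \<ge> 1" by (simp add: Suc_leI)
    then have "card T \<ge> 1" using cT by arith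
    then show ?thesis by auto
  qed
  obtain t0 where t0: "t0 \<in> T" using Tne by blast
  have p1aff: "p1 \<notin> affine hull T" using ind1 p1 unfolding affine_dependent_def T_def by blast
  have p2aff: "p2 \<notin> affine hull T" using ind2 p2 T2 unfolding affine_dependent_def by blast
  define V0 where "V0 = (\<lambda>x. - t0 + x) ` (T - {t0})"
  have affT: "affine hull T = (\<lambda>x. t0 + x) ` span V0"
    using affine_hull_insert_span_gen[of t0 "T - {t0}"] t0 by (simp add: V0_def insert_absorb)
  obtain y n where y: "y \<in> span V0" and nort: "\<And>w. w \<in> span V0 \<Longrightarrow> orthogonal n w" and pdec: "p1 - t0 = y + n"
    using orthogonal_subspace_decomp_exists[of V0 "p1 - t0"] by blast
  define l where "l x = n \<bullet> (x - t0)" for x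
  have l0: "l x = 0" if x: "x \<in> affine hull T" for x
  proof -
    obtain v where "v \<in> span V0" "x = t0 + v" using x affT by auto
    then show ?thesis using nort[of v] by (simp add: l_def orthogonal_def)
  qed
  have lT: "l x = 0" if "x \<in> T" for x using l0 that by (simp add: hull_inc)
  have n0: "n \<noteq> 0"
  proof
    assume "n = 0"
    then have "p1 = t0 + y" using pdec by (simp add: algebra_simps)
    then have "p1 \<in> affine hull T" using affT y by auto
    then show False using p1aff by simp
  qed
  have lp1: "l p1 > 0"
  proof -
    have "n \<bullet> y = 0" using nort[OF y] by (simp add: orthogonal_def)
    then have "l p1 = n \<bullet> n" by (simp add: l_def pdec inner_add_right)
    then show ?thesis using n0 by simp
  qed
  have "p2 \<in> affine hull S1" using mixed_aff_hull[OF s1] sub2 p2 unfolding P_def by blast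
  then obtain \<beta> where \<beta>1: "sum \<beta> S1 = 1" and \<beta>2: "(\<Sum>q\<in>S1. \<beta> q *\<^sub>R q) = p2"
    using affine_hull_finite[OF fin1] by auto
  have lp2: "l p2 = \<beta> p1 * l p1"
  proof -
    have "l p2 = (\<Sum>q\<in>S1. \<beta> q * l q)"
      unfolding l_def using ell_comb[OF fin1 \<beta>1, of n t0] \<beta>2 by simp
    also have "\<dots> = \<beta> p1 * l p1" using finT p1T lT by (simp add: S1T sum.insert)
    finally show ?thesis .
  qed
  have lp2ne: "l p2 \<noteq> 0"
  proof
    assume "l p2 = 0"
    then have b0: "\<beta> p1 = 0" using lp2 lp1 by simp
    have "sum \<beta> T = 1" using \<beta>1 b0 finT p1T by (simp add: S1T sum.insert)
    moreover have "(\<Sum>q\<in>T. \<beta> q *\<^sub>R q) = p2" using \<beta>2 b0 finT p1T by (simp add: S1T sum.insert)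
    ultimately have "p2 \<in> affine hull T" using affine_hull_finite[OF finT] by auto
    then show False using p2aff by simp
  qed
  have lp2neg: "l p2 < 0"
  proof (rule ccontr)
    assume "\<not> l p2 < 0"
    then have lpos: "l p2 > 0" using lp2ne by simp
    then have bpos: "\<beta> p1 > 0" using lp2 lp1 by (simp add: zero_less_mult_iff)
    define N where "N = real (card T)"
    have Npos: "N > 0" using Tne finT by (simp add: N_def card_gt_0_iff)
    define M where "M = (\<Sum>t\<in>T. \<bar>\<beta> t\<bar>)"
    have M0: "M \<ge> 0" by (simp add: M_def sum_nonneg)
    have bM: "\<bar>\<beta> t\<bar> \<le> M" if "t \<in> T" for t
      unfolding M_def using finT that by (intro member_le_sum) auto
    define s where "s = 1 / (1 + N * M)"
    have NM: "1 + N * M > 0" using Npos M0 by (simp add: add_pos_nonneg)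
    have NM1: "1 + N * M \<ge> 1" using Npos M0 by simp
    have spos: "s > 0" using NM by (simp add: s_def)
    have s1': "s \<le> 1" using NM1 by (simp add: s_def)
    have sNM: "s * (1 + N * M) = 1" using NM by (simp add: s_def)
    define g where "g = (\<Sum>t\<in>T. (1/N) *\<^sub>R t)"
    have gT: "g \<in> convex hull T"
      unfolding convex_hull_finite[OF finT] g_def
      by (rule CollectI, rule exI[of _ "\<lambda>_. 1/N"]) (use Npos in \<open>simp add: N_def\<close>)
    define yy where "yy = (1 - s) *\<^sub>R g + s *\<^sub>R p2"
    have y2: "yy \<in> convex hull S2"
    proof -
      have "g \<in> convex hull S2" using gT hull_mono[of T S2] S2T by blast
      moreover have "p2 \<in> convex hull S2" using p2 by (simp add: hull_inc)
      ultimately show ?thesis unfolding yy_def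
        using convexD[OF convex_convex_hull, of g S2 p2 "1 - s" s] spos s1' by simp
    qed
    define u where "u q = (if q = p1 then s * \<beta> p1 else (1 - s) / N + s * \<beta> q)" for q
    have y1: "yy \<in> convex hull S1"
      unfolding convex_hull_finite[OF fin1]
    proof (rule CollectI, rule exI[of _ u], intro conjI ballI)
      fix q assume q: "q \<in> S1"
      show "0 \<le> u q"
      proof (cases "q = p1")
        case True then show ?thesis using spos bpos by (simp add: u_def)
      next
        case False
        then have qT: "q \<in> T" using q S1T by simp
        have "s * N * M \<le> 1 - s" using sNM by (simp add: algebra_simps)
        moreover have "s * N * \<bar>\<beta> q\<bar> \<le> s * N * M" using bM[OF qT] spos Npos by simp
        ultimately have "s * N * \<bar>\<beta> q\<bar> \<le> 1 - s" by linarith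
        then have "s * \<bar>\<beta> q\<bar> \<le> (1 - s) / N" using Npos by (simp add: field_simps)
        moreover have "- (s * \<bar>\<beta> q\<bar>) \<le> s * \<beta> q" using spos
          by (metis abs_ge_minus_self abs_mult abs_of_pos minus_le_iff)
        ultimately show ?thesis using False by (simp add: u_def)
      qed
    next
      have uT: "(\<Sum>q\<in>T. u q) = (\<Sum>q\<in>T. (1 - s) / N + s * \<beta> q)"
        using p1T by (intro sum.cong refl) (auto simp: u_def)
      have sb: "sum \<beta> T = 1 - \<beta> p1" using \<beta>1 finT p1T by (simp add: S1T sum.insert)
      have "sum u S1 = u p1 + sum u T" using finT p1T by (simp add: S1T sum.insert)
      also have "\<dots> = s * \<beta> p1 + ((\<Sum>q\<in>T. (1 - s) / N) + s * sum \<beta> T)"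
        unfolding uT sum.distrib sum_distrib_left[symmetric] by (simp add: u_def)
      also have "(\<Sum>q\<in>T. (1 - s) / N) = 1 - s" using Npos by (simp add: N_def)
      finally show "sum u S1 = 1" by (simp add: sb algebra_simps)
    next
      have uT: "(\<Sum>q\<in>T. u q *\<^sub>R q) = (\<Sum>q\<in>T. ((1 - s) / N) *\<^sub>R q + s *\<^sub>R (\<beta> q *\<^sub>R q))"
        using p1T by (intro sum.cong refl) (auto simp: u_def scaleR_add_left)
      have sb: "(\<Sum>q\<in>T. \<beta> q *\<^sub>R q) = p2 - \<beta> p1 *\<^sub>R p1" using \<beta>2 finT p1T by (simp add: S1T sum.insert algebra_simps)
      have "(\<Sum>q\<in>S1. u q *\<^sub>R q) = u p1 *\<^sub>R p1 + (\<Sum>q\<in>T. u q *\<^sub>R q)"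
        using finT p1T by (simp add: S1T sum.insert)
      also have "\<dots> = (s * \<beta> p1) *\<^sub>R p1 + ((\<Sum>q\<in>T. ((1 - s) / N) *\<^sub>R q) + s *\<^sub>R (\<Sum>q\<in>T. \<beta> q *\<^sub>R q))"
        unfolding uT sum.distrib scaleR_sum_right by (simp add: u_def)
      also have "(\<Sum>q\<in>T. ((1 - s) / N) *\<^sub>R q) = (1 - s) *\<^sub>R g"
        by (simp add: g_def scaleR_sum_right)
      also note sb
      finally show "(\<Sum>q\<in>S1. u q *\<^sub>R q) = yy"
        by (simp add: yy_def algebra_simps)
    qed
    have "yy \<in> convex hull T" using y1 y2 Fc1 unfolding Fc_def T_def by blast
    then have "yy \<in> affine hull T" using convex_hull_subset_affine_hull by blast
    then have "l yy = 0" by (rule l0)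
    moreover have "l g = 0" using gT convex_hull_subset_affine_hull l0 by blast
    moreover have "l yy = (1 - s) * l g + s * l p2"
      by (simp add: l_def yy_def inner_diff_right inner_add_right algebra_simps)
    ultimately show False using spos lpos by simp
  qed
  have finP: "finite P" unfolding P_def by (rule finite_cayley[OF finA])
  define K where "K = 1 + (\<Sum>q\<in>P. \<bar>l q\<bar>)"
  have K: "\<bar>l q\<bar> < K" if "q \<in> P" for q
  proof -
    have "\<bar>l q\<bar> \<le> (\<Sum>q\<in>P. \<bar>l q\<bar>)" using finP that by (intro member_le_sum) auto
    then show ?thesis by (simp add: K_def)
  qed
  define h where "h q = (if q \<in> S1 \<union> S2 then \<bar>l q\<bar> else K)" for q
  have p12: "p1 \<noteq> p2" using neq S1T S2T by auto
  have occ1: "occurs_in_reg_subdiv P h S1"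
  proof (rule occurs_from_functional[OF sub1, where nn="- n" and c="- (n \<bullet> t0)"])
    show "S1 \<noteq> {}" using p1 by auto
    have phi: "- n \<bullet> q + h q = h q - l q - n \<bullet> t0" for q by (simp add: l_def inner_diff_right)
    have main: "h q - l q \<ge> 0 \<and> (h q - l q = 0 \<longleftrightarrow> q \<in> S1)" if q: "q \<in> P" for q
    proof (cases "q \<in> S1")
      case True
      then show ?thesis
      proof (cases "q = p1")
        case True then show ?thesis using lp1 p1 by (simp add: h_def)
      next
        case False then have "q \<in> T" using \<open>q \<in> S1\<close> S1T by simp
        then show ?thesis using lT \<open>q \<in> S1\<close> by (simp add: h_def)
      qed
    next
      case False
      show ?thesis
      proof (cases "q \<in> S2")
        case True
        then have "q = p2" using False S1T S2T by auto
        then show ?thesis using lp2neg False p2 by (simp add: h_def)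
      next
        case False2: False
        then show ?thesis using K[OF q] False by (simp add: h_def abs_less_iff)
      qed
    qed
    show "- n \<bullet> q + h q \<ge> - (n \<bullet> t0)" if "q \<in> P" for q using main[OF that] phi[of q] by simp
    show "- n \<bullet> q + h q = - (n \<bullet> t0) \<longleftrightarrow> q \<in> S1" if "q \<in> P" for q using main[OF that] phi[of q] by simp
  qed
  have occ2: "occurs_in_reg_subdiv P h S2"
  proof (rule occurs_from_functional[OF sub2, where nn="n" and c="n \<bullet> t0"])
    show "S2 \<noteq> {}" using p2 by auto
    have phi: "n \<bullet> q + h q = h q + l q + n \<bullet> t0" for q by (simp add: l_def inner_diff_right)
    have main: "h q + l q \<ge> 0 \<and> (h q + l q = 0 \<longleftrightarrow> q \<in> S2)" if q: "q \<in> P" for q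
    proof (cases "q \<in> S2")
      case True
      then show ?thesis
      proof (cases "q = p2")
        case True then show ?thesis using lp2neg p2 by (simp add: h_def)
      next
        case False then have "q \<in> T" using \<open>q \<in> S2\<close> S2T by simp
        then show ?thesis using lT \<open>q \<in> S2\<close> by (simp add: h_def)
      qed
    next
      case False
      show ?thesis
      proof (cases "q \<in> S1")
        case True
        then have "q = p1" using False S1T S2T by auto
        then show ?thesis using lp1 False p1 by (simp add: h_def)
      next
        case False1: False
        then show ?thesis using K[OF q] False by (simp add: h_def abs_less_iff)
      qed
    qed
    show "n \<bullet> q + h q \<ge> n \<bullet> t0" if "q \<in> P" for q using main[OF that] phi[of q] by simp
    show "n \<bullet> q + h q = n \<bullet> t0 \<longleftrightarrow> q \<in> S2" if "q \<in> P" for q using main[OF that] phi[of q] by (simp add: add.commute)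
  qed
  show ?thesis using occ1 occ2 unfolding P_def by blast
qed



theorem theorem3p2:
  fixes A :: "'d::finite \<Rightarrow> (int^'d) set"
    and c :: "'d \<Rightarrow> int^'d \<Rightarrow> real"
  assumes finA: "\<And>i. finite (A i)"
    and has_simplex: "\<exists>S. is_simplex (cayley A) S"
    and c_zero: "\<And>i a. a \<notin> A i \<Longrightarrow> c i a = 0"
  shows "(\<forall>(h :: 'd pt \<Rightarrow> real) (D :: 'd pt set set).
            finite D \<and>
            (\<forall>S\<in>D. mixed_simplex A S \<and> pos_decorated A c S \<and>
                     occurs_in_reg_subdiv (cayley A) h S)
            \<longrightarrow> many_solutions A c h (card D))
       \<and> (\<forall>S1 S2. mixed_simplex A S1 \<and> pos_decorated A c S1 \<and>
                  mixed_simplex A S2 \<and> pos_decorated A c S2 \<and>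
                  S1 \<noteq> S2 \<and> share_facet S1 S2
            \<longrightarrow> (\<exists>h. occurs_in_reg_subdiv (cayley A) h S1 \<and>
                     occurs_in_reg_subdiv (cayley A) h S2 \<and>
                     many_solutions A c h 2))"
proof (intro conjI allI impI)
  fix h :: "'d pt \<Rightarrow> real" and D :: "'d pt set set"
  assume H: "finite D \<and> (\<forall>S\<in>D. mixed_simplex A S \<and> pos_decorated A c S \<and> occurs_in_reg_subdiv (cayley A) h S)"
  show "many_solutions A c h (card D)"
    using part1[where A=A and D=D and c=c and h=h, OF finA] H by blast
next
  fix S1 S2
  assume H: "mixed_simplex A S1 \<and> pos_decorated A c S1 \<and> mixed_simplex A S2 \<and> pos_decorated A c S2 \<and>
                  S1 \<noteq> S2 \<and> share_facet S1 S2"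
  then obtain h where h: "occurs_in_reg_subdiv (cayley A) h S1" "occurs_in_reg_subdiv (cayley A) h S2"
    using part2_h[where A=A, OF finA, of S1 S2] by (auto simp: mixed_simplex_def)
  have "many_solutions A c h (card {S1, S2})"
    by (rule part1[where A=A, OF finA]) (use H h in auto)
  moreover have "card {S1, S2} = 2" using H by simp
  ultimately show "\<exists>h. occurs_in_reg_subdiv (cayley A) h S1 \<and> occurs_in_reg_subdiv (cayley A) h S2 \<and> many_solutions A c h 2"
    using h by auto
qed

end
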